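(* Let $n\ge2$, $\mathbb F\in\{\mathbb R,\mathbb C\}$, $A=(a^k_j)$ an $(n-1)\times(n-1)$ matrix over $\mathbb F$, and $\mathfrak a_A$ the Lie algebra with basis $e_1,\dots,e_n$ whose only nonzero brackets are $[e_j,e_n]=\sum_{k=1}^{n-1}a^k_je_k$, $j=1,\dots,n-1$ (and their antisymmetric counterparts). Let $\lambda_1,\dots,\lambda_{n-1}$ be the roots in $\mathbb C$ (with multiplicity) of the characteristic polynomial of $A$. If $p,q\in\mathbb N$ are such that $\mathrm{tr}(A^p)=\sum_i\lambda_i^p\ne0$, $\mathrm{tr}(A^q)=\sum_i\lambda_i^q\ne0$ and $\mathrm{tr}(A^{p+q})=\sum_i\lambda_i^{p+q}\ne0$, then $\mathfrak C_{pq}(\mathfrak a_A)$ is well defined and $$\mathfrak C_{pq}(\mathfrak a_A)=\frac{\mathrm{tr}(A^p)\,\mathrm{tr}(A^q)}{\mathrm{tr}(A^{p+q})}=\frac{(\lambda_1^p+\dots+\lambda_{n-1}^p)(\lambda_1^q+\dots+\lambda_{n-1}^q)}{\lambda_1^{p+q}+\dots+\lambda_{n-1}^{p+q}}.$$ Moreover, the rank of $\mathfrak a_A$ (the dimension of its Cartan subalgebras) equals the multiplicity of $0$ as a root of the characteristic polynomial of $A$, plus one.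
   Context: For $p,q\in\mathbb N$, $\mathfrak C_{pq}(\mathfrak g)$ is said to be well defined if there exist $u,v\in\mathfrak g$ with $\mathrm{tr}(\mathrm{ad}_u^{\,p})\ne0$, $\mathrm{tr}(\mathrm{ad}_v^{\,q})\ne0$, $\mathrm{tr}(\mathrm{ad}_u^{\,p}\mathrm{ad}_v^{\,q})\ne0$, and the value $\mathrm{tr}(\mathrm{ad}_u^{\,p})\,\mathrm{tr}(\mathrm{ad}_v^{\,q})/\mathrm{tr}(\mathrm{ad}_u^{\,p}\mathrm{ad}_v^{\,q})$ is the same for all such pairs $(u,v)$; this common value is $\mathfrak C_{pq}(\mathfrak g)$. *)

theory Defs
  imports "Jordan_Normal_Form.Jordan_Normal_Form" "Jordan_Normal_Form.VS_Connect"
begin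

text \<open>The Lie algebra a_A on F^n (vectors of dimension n, basis e_1..e_n is
  unit_vec n 0, ..., unit_vec n (n-1); so e_n is index n-1).  The matrix A is
  (n-1) x (n-1) with entry A $$ (k,j) = a^k_j (indices shifted by one), and
  the only nonzero brackets are [e_j,e_n] = sum_k a^k_j e_k (and antisymmetric).
  Extending bilinearly: [u,v] = sum_{j<n-1} (u_j v_n - u_n v_j) [e_j,e_n].\<close>
definition aA_bracket :: "'a::comm_ring_1 mat \<Rightarrow> nat \<Rightarrow> 'a vec \<Rightarrow> 'a vec \<Rightarrow> 'a vec" where
  "aA_bracket A n u v = vec n (\<lambda>k. if k < n - 1
      then (\<Sum>j<n - 1. A $$ (k, j) * (u $ j * v $ (n - 1) - u $ (n - 1) * v $ j))
      else 0)"

definition trace :: "'a::comm_ring_1 mat \<Rightarrow> 'a" where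
  "trace M = (\<Sum>i<dim_row M. M $$ (i, i))"

definition ad_mat :: "('a::comm_ring_1 vec \<Rightarrow> 'a vec \<Rightarrow> 'a vec) \<Rightarrow> nat \<Rightarrow> 'a vec \<Rightarrow> 'a mat" where
  "ad_mat br n u = mat n n (\<lambda>(i, l). br u (unit_vec n l) $ i)"

definition Cpq_well_defined_with_value ::
  "('a::field vec \<Rightarrow> 'a vec \<Rightarrow> 'a vec) \<Rightarrow> nat \<Rightarrow> nat \<Rightarrow> nat \<Rightarrow> 'a \<Rightarrow> bool" where
  "Cpq_well_defined_with_value br n p q c \<longleftrightarrow>
     (let adm = ad_mat br n;
          ok = (\<lambda>u v. trace (adm u ^\<^sub>m p) \<noteq> 0 \<and> trace (adm v ^\<^sub>m q) \<noteq> 0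
                    \<and> trace (adm u ^\<^sub>m p * adm v ^\<^sub>m q) \<noteq> 0)
      in (\<exists>u \<in> carrier_vec n. \<exists>v \<in> carrier_vec n. ok u v) \<and>
         (\<forall>u \<in> carrier_vec n. \<forall>v \<in> carrier_vec n. ok u v \<longrightarrow>
             trace (adm u ^\<^sub>m p) * trace (adm v ^\<^sub>m q) / trace (adm u ^\<^sub>m p * adm v ^\<^sub>m q) = c))"

definition lin_subspace :: "nat \<Rightarrow> 'a::field vec set \<Rightarrow> bool" where
  "lin_subspace n W \<longleftrightarrow> VectorSpace.subspace (class_ring :: 'a ring) W (module_vec TYPE('a) n)"

definition lin_dim :: "nat \<Rightarrow> 'a::field vec set \<Rightarrow> nat" where
  "lin_dim n W = vectorspace.dim (class_ring :: 'a ring) ((module_vec TYPE('a) n)\<lparr>carrier := W\<rparr>)"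

definition lin_span :: "nat \<Rightarrow> 'a::field vec set \<Rightarrow> 'a vec set" where
  "lin_span n S = module.span (class_ring :: 'a ring) (module_vec TYPE('a) n) S"

definition lie_subalgebra :: "('a::field vec \<Rightarrow> 'a vec \<Rightarrow> 'a vec) \<Rightarrow> nat \<Rightarrow> 'a vec set \<Rightarrow> bool" where
  "lie_subalgebra br n H \<longleftrightarrow> lin_subspace n H \<and> (\<forall>x\<in>H. \<forall>y\<in>H. br x y \<in> H)"

fun lower_central :: "('a::field vec \<Rightarrow> 'a vec \<Rightarrow> 'a vec) \<Rightarrow> nat \<Rightarrow> 'a vec set \<Rightarrow> nat \<Rightarrow> 'a vec set" where
  "lower_central br n H 0 = H"
| "lower_central br n H (Suc k) =
     lin_span n {br x y | x y. x \<in> H \<and> y \<in> lower_central br n H k}"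

definition lie_nilpotent :: "('a::field vec \<Rightarrow> 'a vec \<Rightarrow> 'a vec) \<Rightarrow> nat \<Rightarrow> 'a vec set \<Rightarrow> bool" where
  "lie_nilpotent br n H \<longleftrightarrow> (\<exists>k. lower_central br n H k = {0\<^sub>v n})"

definition lie_normalizer :: "('a::field vec \<Rightarrow> 'a vec \<Rightarrow> 'a vec) \<Rightarrow> nat \<Rightarrow> 'a vec set \<Rightarrow> 'a vec set" where
  "lie_normalizer br n H = {x \<in> carrier_vec n. \<forall>h\<in>H. br x h \<in> H}"

definition cartan_subalgebra :: "('a::field vec \<Rightarrow> 'a vec \<Rightarrow> 'a vec) \<Rightarrow> nat \<Rightarrow> 'a vec set \<Rightarrow> bool" where
  "cartan_subalgebra br n H \<longleftrightarrow>
     lie_subalgebra br n H \<and> lie_nilpotent br n H \<and> lie_normalizer br n H = H"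

end

theory Submission
  imports Defs "Jordan_Normal_Form.Schur_Decomposition" "Jordan_Normal_Form.Jordan_Normal_Form_Uniqueness"
    "Jordan_Normal_Form.Jordan_Normal_Form_Existence"
begin


lemma trace_mult_comm:
  fixes X :: "'a::comm_ring_1 mat"
  assumes "X \<in> carrier_mat n m" "Y \<in> carrier_mat m n"
  shows "trace (X * Y) = trace (Y * X)"
proof -
  have "trace (X * Y) = (\<Sum>i<n. \<Sum>k<m. X $$ (i,k) * Y $$ (k,i))"
    using assms by (simp add: trace_def scalar_prod_def atLeast0LessThan)
  also have "\<dots> = (\<Sum>k<m. \<Sum>i<n. Y $$ (k,i) * X $$ (i,k))"
    by (subst sum.swap) (simp add: mult.commute)
  also have "\<dots> = trace (Y * X)"
    using assms by (simp add: trace_def scalar_prod_def atLeast0LessThan)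
  finally show ?thesis .
qed

lemma trace_similar:
  fixes X :: "'a::comm_ring_1 mat"
  assumes "similar_mat X Y"
  shows "trace X = trace Y"
proof -
  from assms obtain P Q where w: "similar_mat_wit X Y P Q" unfolding similar_mat_def by auto
  define n where "n = dim_row X"
  from similar_mat_witD[OF n_def w] have X: "X \<in> carrier_mat n n" and Y: "Y \<in> carrier_mat n n"
    and P: "P \<in> carrier_mat n n" and Q: "Q \<in> carrier_mat n n" and QP: "Q * P = 1\<^sub>m n"
    and XY: "X = P * Y * Q" by auto
  have "trace X = trace (P * (Y * Q))" using XY P Y Q by (simp add: assoc_mult_mat)
  also have "\<dots> = trace ((Y * Q) * P)" by (rule trace_mult_comm[OF P], insert Y Q, auto)
  also have "\<dots> = trace (Y * (Q * P))" using P Y Q by (simp add: assoc_mult_mat)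
  also have "\<dots> = trace Y" using QP Y by simp
  finally show ?thesis .
qed

lemma upper_triangular_mult_diag:
  fixes X :: "'a::comm_ring_1 mat"
  assumes X: "X \<in> carrier_mat n n" and Y: "Y \<in> carrier_mat n n"
    and uX: "upper_triangular X" and uY: "upper_triangular Y"
  shows "upper_triangular (X * Y)" "\<And>i. i < n \<Longrightarrow> (X * Y) $$ (i,i) = X $$ (i,i) * Y $$ (i,i)"
proof -
  show "upper_triangular (X * Y)"
  proof (rule upper_triangularI)
    fix i j assume ji: "j < i" and i: "i < dim_row (X * Y)"
    hence i: "i < n" using X by auto
    have "(X * Y) $$ (i,j) = (\<Sum>k<n. X $$ (i,k) * Y $$ (k,j))"
      using X Y i ji by (simp add: scalar_prod_def atLeast0LessThan)
    also have "\<dots> = 0"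
    proof (rule sum.neutral, intro ballI)
      fix k assume k: "k \<in> {..<n}"
      show "X $$ (i,k) * Y $$ (k,j) = 0"
      proof (cases "k < i")
        case True then show ?thesis using uX i X unfolding upper_triangular_def by auto
      next
        case False then have "j < k" using ji by auto
        then have "k < n" using k by auto
        then show ?thesis using uY \<open>j < k\<close> Y unfolding upper_triangular_def by auto
      qed
    qed
    finally show "(X * Y) $$ (i,j) = 0" .
  qed
  fix i assume i: "i < n"
  have "(X * Y) $$ (i,i) = (\<Sum>k<n. X $$ (i,k) * Y $$ (k,i))"
    using X Y i by (simp add: scalar_prod_def atLeast0LessThan)
  also have "\<dots> = X $$ (i,i) * Y $$ (i,i)"
  proof -
    have "(\<Sum>k<n. X $$ (i,k) * Y $$ (k,i)) = (\<Sum>k\<in>{i}. X $$ (i,k) * Y $$ (k,i))"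
    proof (rule sum.mono_neutral_right)
      show "\<forall>k\<in>{..<n} - {i}. X $$ (i,k) * Y $$ (k,i) = 0"
      proof
        fix k assume k: "k \<in> {..<n} - {i}"
        show "X $$ (i,k) * Y $$ (k,i) = 0"
        proof (cases "k < i")
          case True then show ?thesis using uX i X unfolding upper_triangular_def by auto
        next
          case False then have "i < k" "k < n" using k by auto
          then show ?thesis using uY Y unfolding upper_triangular_def by auto
        qed
      qed
    qed (use i in auto)
    then show ?thesis by simp
  qed
  finally show "(X * Y) $$ (i,i) = X $$ (i,i) * Y $$ (i,i)" .
qed

lemma upper_triangular_pow:
  fixes X :: "'a::comm_ring_1 mat"
  assumes X: "X \<in> carrier_mat n n" and uX: "upper_triangular X"
  shows "upper_triangular (X ^\<^sub>m k) \<and> (\<forall>i<n. (X ^\<^sub>m k) $$ (i,i) = (X $$ (i,i)) ^ k)"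
proof (induction k)
  case 0
  then show ?case using X by auto
next
  case (Suc k)
  have Xk: "X ^\<^sub>m k \<in> carrier_mat n n" using X by auto
  from upper_triangular_mult_diag[OF Xk X _ uX] Suc
  show ?case by auto
qed

lemma trace_pow_char_poly:
  fixes X :: "complex mat"
  assumes X: "X \<in> carrier_mat n n"
    and cp: "char_poly X = (\<Prod>l\<leftarrow>lam. [:- l, 1:])"
  shows "trace (X ^\<^sub>m k) = (\<Sum>l\<leftarrow>lam. l ^ k)"
proof -
  obtain B P Q where sd: "schur_decomposition X lam = (B,P,Q)" by (cases "schur_decomposition X lam", auto)
  from schur_decomposition[OF X cp sd] have w: "similar_mat_wit X B P Q"
    and uB: "upper_triangular B" and dB: "diag_mat B = lam" by auto
  from similar_mat_witD2[OF X w] have B: "B \<in> carrier_mat n n" by auto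
  have "similar_mat (X ^\<^sub>m k) (B ^\<^sub>m k)"
    using similar_mat_wit_pow[OF w, of k] unfolding similar_mat_def by auto
  hence "trace (X ^\<^sub>m k) = trace (B ^\<^sub>m k)" by (rule trace_similar)
  also have "\<dots> = (\<Sum>i<n. (B $$ (i,i)) ^ k)"
    using upper_triangular_pow[OF B uB, of k] B unfolding trace_def by auto
  also have "\<dots> = (\<Sum>l\<leftarrow>diag_mat B. l ^ k)"
    using B unfolding diag_mat_def
    by (simp add: sum_list_sum_nth atLeast0LessThan)
  finally show ?thesis using dB by simp
qed



definition Tm :: "nat \<Rightarrow> 'a::comm_ring_1 mat \<Rightarrow> 'a vec \<Rightarrow> 'a mat" where
  "Tm N X y = mat (Suc N) (Suc N) (\<lambda>(i,j). if i < N then (if j < N then X $$ (i,j) else y $ i) else 0)"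

lemma Tm_carrier[simp]: "Tm N X y \<in> carrier_mat (Suc N) (Suc N)"
  unfolding Tm_def by auto

lemma Tm_dims[simp]: "dim_row (Tm N X y) = Suc N" "dim_col (Tm N X y) = Suc N"
  unfolding Tm_def by auto

lemma sum_lessThan_Suc_split: "(\<Sum>k<Suc N. f k) = (\<Sum>k<N. f k) + f N"
  by simp

lemma Tm_mult:
  fixes X :: "'a::comm_ring_1 mat"
  assumes X: "X \<in> carrier_mat N N" "X' \<in> carrier_mat N N" and y: "y' \<in> carrier_vec N"
  shows "Tm N X y * Tm N X' y' = Tm N (X * X') (X *\<^sub>v y')"
proof (rule eq_matI)
  fix i j assume i: "i < dim_row (Tm N (X * X') (X *\<^sub>v y'))" and j: "j < dim_col (Tm N (X * X') (X *\<^sub>v y'))"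
  hence i: "i < Suc N" and j: "j < Suc N" by (auto simp: Tm_def)
  have "(Tm N X y * Tm N X' y') $$ (i,j) = (\<Sum>k<Suc N. Tm N X y $$ (i,k) * Tm N X' y' $$ (k,j))"
    using i j by (simp add: scalar_prod_def atLeast0LessThan)
  also have "\<dots> = (\<Sum>k<N. Tm N X y $$ (i,k) * Tm N X' y' $$ (k,j))"
    by (simp add: Tm_def j)
  also have "\<dots> = Tm N (X * X') (X *\<^sub>v y') $$ (i,j)"
    using i j X y by (auto simp: Tm_def scalar_prod_def atLeast0LessThan)
  finally show "(Tm N X y * Tm N X' y') $$ (i,j) = Tm N (X * X') (X *\<^sub>v y') $$ (i,j)" .
qed auto

lemma Tm_pow:
  fixes X :: "'a::comm_ring_1 mat"
  assumes X: "X \<in> carrier_mat N N" and y: "y \<in> carrier_vec N"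
  shows "Tm N X y ^\<^sub>m (Suc k) = Tm N (X ^\<^sub>m (Suc k)) (X ^\<^sub>m k *\<^sub>v y)"
proof (induction k)
  case 0
  then show ?case using X y by simp
next
  case (Suc k)
  have "Tm N X y ^\<^sub>m (Suc (Suc k)) = Tm N (X ^\<^sub>m (Suc k)) (X ^\<^sub>m k *\<^sub>v y) * Tm N X y"
    using Suc by simp
  also have "\<dots> = Tm N (X ^\<^sub>m (Suc k) * X) (X ^\<^sub>m (Suc k) *\<^sub>v y)"
    by (rule Tm_mult, insert X y, auto)
  finally show ?case by simp
qed

lemma trace_Tm: "X \<in> carrier_mat N N \<Longrightarrow> trace (Tm N X y) = trace X"
  unfolding trace_def Tm_def by simp

lemma smult_pow_mat:
  fixes X :: "'a::comm_ring_1 mat"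
  assumes X: "X \<in> carrier_mat N N"
  shows "(c \<cdot>\<^sub>m X) ^\<^sub>m k = c ^ k \<cdot>\<^sub>m (X ^\<^sub>m k)"
proof (induction k)
  case 0 then show ?case using X by (auto intro!: eq_matI)
next
  case (Suc k)
  have Xk: "X ^\<^sub>m k \<in> carrier_mat N N" using X by auto
  have "(c \<cdot>\<^sub>m X) ^\<^sub>m Suc k = (c ^ k \<cdot>\<^sub>m (X ^\<^sub>m k)) * (c \<cdot>\<^sub>m X)" using Suc by simp
  also have "\<dots> = c ^ k \<cdot>\<^sub>m (X ^\<^sub>m k * (c \<cdot>\<^sub>m X))"
    by (rule mult_smult_assoc_mat[OF Xk], insert X, auto)
  also have "\<dots> = c ^ k \<cdot>\<^sub>m (c \<cdot>\<^sub>m (X ^\<^sub>m k * X))"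
    using mult_smult_distrib[OF Xk X] by simp
  also have "\<dots> = c ^ Suc k \<cdot>\<^sub>m (X ^\<^sub>m Suc k)"
    by (rule eq_matI, auto simp: mult.commute)
  finally show ?case .
qed

lemma trace_smult: "X \<in> carrier_mat N N \<Longrightarrow> trace (c \<cdot>\<^sub>m X) = c * trace X"
  unfolding trace_def by (simp add: sum_distrib_left)

lemma ad_mat_aA:
  fixes A :: "'a::comm_ring_1 mat"
  assumes A: "A \<in> carrier_mat N N"
  shows "ad_mat (aA_bracket A (Suc N)) (Suc N) u
     = Tm N ((- (u $ N)) \<cdot>\<^sub>m A) (A *\<^sub>v vec N (\<lambda>j. u $ j))"
proof (rule eq_matI)
  fix i l assume i: "i < dim_row (Tm N ((- (u $ N)) \<cdot>\<^sub>m A) (A *\<^sub>v vec N (\<lambda>j. u $ j)))"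
    and l: "l < dim_col (Tm N ((- (u $ N)) \<cdot>\<^sub>m A) (A *\<^sub>v vec N (\<lambda>j. u $ j)))"
  hence i: "i < Suc N" and l: "l < Suc N" by (auto simp: Tm_def)
  show "ad_mat (aA_bracket A (Suc N)) (Suc N) u $$ (i, l) = Tm N ((- (u $ N)) \<cdot>\<^sub>m A) (A *\<^sub>v vec N (\<lambda>j. u $ j)) $$ (i, l)"
  proof (cases "i < N")
    case False
    then show ?thesis using i l by (simp add: ad_mat_def aA_bracket_def Tm_def)
  next
    case iN: True
    show ?thesis
    proof (cases "l < N")
      case True
      have "ad_mat (aA_bracket A (Suc N)) (Suc N) u $$ (i, l) =
         (\<Sum>j<N. A $$ (i, j) * (u $ j * unit_vec (Suc N) l $ N - u $ N * unit_vec (Suc N) l $ j))"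
        using i l iN by (simp add: ad_mat_def aA_bracket_def)
      also have "\<dots> = (\<Sum>j<N. if j = l then - (u $ N * A $$ (i, l)) else 0)"
        by (rule sum.cong, insert True, auto simp: unit_vec_def)
      also have "\<dots> = - (u $ N * A $$ (i, l))" using True by simp
      finally show ?thesis using True iN A by (simp add: Tm_def)
    next
      case False
      hence lN: "l = N" using l by auto
      have "ad_mat (aA_bracket A (Suc N)) (Suc N) u $$ (i, l) =
         (\<Sum>j<N. A $$ (i, j) * (u $ j * unit_vec (Suc N) l $ N - u $ N * unit_vec (Suc N) l $ j))"
        using i l iN by (simp add: ad_mat_def aA_bracket_def)
      also have "\<dots> = (\<Sum>j<N. A $$ (i, j) * u $ j)"
        by (rule sum.cong, insert lN, auto simp: unit_vec_def)
      finally show ?thesis using lN iN A by (simp add: Tm_def scalar_prod_def atLeast0LessThan)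
    qed
  qed
qed (auto simp: ad_mat_def Tm_def)

lemma pow_mat_add:
  fixes X :: "'a::semiring_1 mat"
  assumes X: "X \<in> carrier_mat n n"
  shows "X ^\<^sub>m k * X ^\<^sub>m l = X ^\<^sub>m (k + l)"
proof (induction l)
  case 0 then show ?case using X by simp
next
  case (Suc l)
  have "X ^\<^sub>m k * X ^\<^sub>m Suc l = X ^\<^sub>m k * (X ^\<^sub>m l * X)" by simp
  also have "\<dots> = (X ^\<^sub>m k * X ^\<^sub>m l) * X"
    by (rule assoc_mult_mat[symmetric], insert X, auto)
  also have "\<dots> = X ^\<^sub>m (k + Suc l)" using Suc by simp
  finally show ?case .
qed

lemma pow_mat_comm:
  fixes X :: "'a::semiring_1 mat"
  assumes X: "X \<in> carrier_mat n n"
  shows "X ^\<^sub>m k * X = X * X ^\<^sub>m k"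
  using pow_mat_add[OF X, of k 1] pow_mat_add[OF X, of 1 k] X by (simp add: add.commute)

lemma trace_ad_pow:
  fixes A :: "'a::comm_ring_1 mat"
  assumes A: "A \<in> carrier_mat N N" and p: "p \<ge> 1"
  shows "\<exists>y\<in>carrier_vec N. ad_mat (aA_bracket A (Suc N)) (Suc N) u ^\<^sub>m p = Tm N ((- (u $ N)) ^ p \<cdot>\<^sub>m A ^\<^sub>m p) y"
proof -
  obtain p' where p': "p = Suc p'" using p by (cases p, auto)
  let ?X = "(- (u $ N)) \<cdot>\<^sub>m A"
  have X: "?X \<in> carrier_mat N N" using A by auto
  have y: "A *\<^sub>v vec N (\<lambda>j. u $ j) \<in> carrier_vec N" using A by auto
  have "ad_mat (aA_bracket A (Suc N)) (Suc N) u ^\<^sub>m p = Tm N ((- (u $ N)) ^ p \<cdot>\<^sub>m A ^\<^sub>m p) (?X ^\<^sub>m p' *\<^sub>v (A *\<^sub>v vec N (\<lambda>j. u $ j)))"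
    unfolding ad_mat_aA[OF A] p' Tm_pow[OF X y] smult_pow_mat[OF A] ..
  moreover have "?X ^\<^sub>m p' *\<^sub>v (A *\<^sub>v vec N (\<lambda>j. u $ j)) \<in> carrier_vec N" by (rule mult_mat_vec_carrier[OF pow_carrier_mat[OF X] y])
  ultimately show ?thesis by blast
qed

lemma ratio_cancel:
  fixes c d a b e :: "'a::field"
  assumes "c * d \<noteq> 0"
  shows "c * a * (d * b) / (c * d * e) = a * b / e"
proof -
  have "c * a * (d * b) = (c * d) * (a * b)" by (simp add: ac_simps)
  moreover have "c * d * e = (c * d) * e" by simp
  ultimately show ?thesis using assms by simp
qed

lemma Cpq_generic:
  fixes A :: "'a::field mat"
  assumes A: "A \<in> carrier_mat N N" and p: "p \<ge> 1" and q: "q \<ge> 1"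
    and tp: "trace (A ^\<^sub>m p) \<noteq> 0" and tq: "trace (A ^\<^sub>m q) \<noteq> 0"
    and tpq: "trace (A ^\<^sub>m (p + q)) \<noteq> 0"
  shows "Cpq_well_defined_with_value (aA_bracket A (Suc N)) (Suc N) p q
          (trace (A ^\<^sub>m p) * trace (A ^\<^sub>m q) / trace (A ^\<^sub>m (p + q)))"
proof -
  let ?adm = "ad_mat (aA_bracket A (Suc N)) (Suc N)"
  have Ap: "A ^\<^sub>m p \<in> carrier_mat N N" "A ^\<^sub>m q \<in> carrier_mat N N" using A by auto
  have tr1: "trace (?adm u ^\<^sub>m k) = (- (u $ N)) ^ k * trace (A ^\<^sub>m k)" if k: "k \<ge> 1" for u k
  proof -
    from trace_ad_pow[OF A k, of u] obtain y where e: "?adm u ^\<^sub>m k = Tm N ((- (u $ N)) ^ k \<cdot>\<^sub>m A ^\<^sub>m k) y" by blast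
    have Ak: "A ^\<^sub>m k \<in> carrier_mat N N" using A by auto
    show ?thesis unfolding e trace_Tm[OF smult_carrier_mat[OF Ak]] trace_smult[OF Ak] ..
  qed
  have tr2: "trace (?adm u ^\<^sub>m p * ?adm v ^\<^sub>m q) = (- (u $ N)) ^ p * (- (v $ N)) ^ q * trace (A ^\<^sub>m (p + q))" for u v
  proof -
    from trace_ad_pow[OF A p, of u] obtain y where e1: "?adm u ^\<^sub>m p = Tm N ((- (u $ N)) ^ p \<cdot>\<^sub>m A ^\<^sub>m p) y" by blast
    from trace_ad_pow[OF A q, of v] obtain y' where e2y: "y' \<in> carrier_vec N" and e2: "?adm v ^\<^sub>m q = Tm N ((- (v $ N)) ^ q \<cdot>\<^sub>m A ^\<^sub>m q) y'" by blast
    have "?adm u ^\<^sub>m p * ?adm v ^\<^sub>m q = Tm N ((- (u $ N)) ^ p \<cdot>\<^sub>m A ^\<^sub>m p) y * Tm N ((- (v $ N)) ^ q \<cdot>\<^sub>m A ^\<^sub>m q) y'"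
      unfolding e1 e2 ..
    also have "\<dots> = Tm N (((- (u $ N)) ^ p \<cdot>\<^sub>m A ^\<^sub>m p) * ((- (v $ N)) ^ q \<cdot>\<^sub>m A ^\<^sub>m q)) (((- (u $ N)) ^ p \<cdot>\<^sub>m A ^\<^sub>m p) *\<^sub>v y')"
      by (rule Tm_mult, insert Ap e2y, auto)
    also have "((- (u $ N)) ^ p \<cdot>\<^sub>m A ^\<^sub>m p) * ((- (v $ N)) ^ q \<cdot>\<^sub>m A ^\<^sub>m q)
       = ((- (u $ N)) ^ p * (- (v $ N)) ^ q) \<cdot>\<^sub>m (A ^\<^sub>m p * A ^\<^sub>m q)"
      using Ap by (subst mult_smult_assoc_mat[of _ N N _ N], auto simp: mult_smult_distrib[of _ N N _ N])
    also have "A ^\<^sub>m p * A ^\<^sub>m q = A ^\<^sub>m (p + q)" by (rule pow_mat_add[OF A])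
    finally have e: "?adm u ^\<^sub>m p * ?adm v ^\<^sub>m q = Tm N (((- (u $ N)) ^ p * (- (v $ N)) ^ q) \<cdot>\<^sub>m A ^\<^sub>m (p + q)) (((- (u $ N)) ^ p \<cdot>\<^sub>m A ^\<^sub>m p) *\<^sub>v y')" .
    have Ak: "A ^\<^sub>m (p + q) \<in> carrier_mat N N" using A by auto
    show ?thesis unfolding e trace_Tm[OF smult_carrier_mat[OF Ak]] trace_smult[OF Ak] ..
  qed
  let ?ok = "\<lambda>u v. trace (?adm u ^\<^sub>m p) \<noteq> 0 \<and> trace (?adm v ^\<^sub>m q) \<noteq> 0
                    \<and> trace (?adm u ^\<^sub>m p * ?adm v ^\<^sub>m q) \<noteq> 0"
  let ?e = "unit_vec (Suc N) N :: 'a vec"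
  have eN: "?e $ N = 1" by simp
  have ex: "?ok ?e ?e" unfolding tr1[OF p] tr1[OF q] tr2 eN using tp tq tpq by simp
  have all: "trace (?adm u ^\<^sub>m p) * trace (?adm v ^\<^sub>m q) / trace (?adm u ^\<^sub>m p * ?adm v ^\<^sub>m q)
      = trace (A ^\<^sub>m p) * trace (A ^\<^sub>m q) / trace (A ^\<^sub>m (p + q))" if "?ok u v" for u v
  proof -
    from that have nz: "(- (u $ N)) ^ p * (- (v $ N)) ^ q \<noteq> 0" unfolding tr2 by auto
    show ?thesis unfolding tr1[OF p] tr1[OF q] tr2 by (rule ratio_cancel[OF nz])
  qed
  show ?thesis unfolding Cpq_well_defined_with_value_def Let_def
    using ex all by (auto intro!: bexI[of _ ?e])
qed


lemma trace_map_of_real: "X \<in> carrier_mat N N \<Longrightarrow> trace (map_mat complex_of_real X) = complex_of_real (trace X)"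
  unfolding trace_def by simp

lemma part_complex:
  fixes A :: "complex mat"
  assumes n: "n \<ge> 2" and p: "p \<ge> 1" and q: "q \<ge> 1"
    and A: "A \<in> carrier_mat (n - 1) (n - 1)"
    and cp: "char_poly A = (\<Prod>l\<leftarrow>lam. [:- l, 1:])"
    and tp: "trace (A ^\<^sub>m p) \<noteq> 0" and tq: "trace (A ^\<^sub>m q) \<noteq> 0" and tpq: "trace (A ^\<^sub>m (p + q)) \<noteq> 0"
  shows "Cpq_well_defined_with_value (aA_bracket A n) n p q
          (trace (A ^\<^sub>m p) * trace (A ^\<^sub>m q) / trace (A ^\<^sub>m (p + q))) \<and>
       trace (A ^\<^sub>m p) * trace (A ^\<^sub>m q) / trace (A ^\<^sub>m (p + q)) =
         (\<Sum>l\<leftarrow>lam. l ^ p) * (\<Sum>l\<leftarrow>lam. l ^ q) / (\<Sum>l\<leftarrow>lam. l ^ (p + q))"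
proof -
  obtain N where nN: "n = Suc N" using n by (cases n, auto)
  have A': "A \<in> carrier_mat N N" using A nN by simp
  show ?thesis
    unfolding nN using Cpq_generic[OF A' p q tp tq tpq]
      trace_pow_char_poly[OF A' cp] by simp
qed

lemma part_real:
  fixes A :: "real mat"
  assumes n: "n \<ge> 2" and p: "p \<ge> 1" and q: "q \<ge> 1"
    and A: "A \<in> carrier_mat (n - 1) (n - 1)"
    and cp: "char_poly (map_mat complex_of_real A) = (\<Prod>l\<leftarrow>lam. [:- l, 1:])"
    and tp: "trace (A ^\<^sub>m p) \<noteq> 0" and tq: "trace (A ^\<^sub>m q) \<noteq> 0" and tpq: "trace (A ^\<^sub>m (p + q)) \<noteq> 0"
  shows "Cpq_well_defined_with_value (aA_bracket A n) n p q
          (trace (A ^\<^sub>m p) * trace (A ^\<^sub>m q) / trace (A ^\<^sub>m (p + q))) \<and>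
       complex_of_real (trace (A ^\<^sub>m p) * trace (A ^\<^sub>m q) / trace (A ^\<^sub>m (p + q))) =
         (\<Sum>l\<leftarrow>lam. l ^ p) * (\<Sum>l\<leftarrow>lam. l ^ q) / (\<Sum>l\<leftarrow>lam. l ^ (p + q))"
proof -
  obtain N where nN: "n = Suc N" using n by (cases n, auto)
  have A': "A \<in> carrier_mat N N" using A nN by simp
  have cA: "map_mat complex_of_real A \<in> carrier_mat N N" using A' by simp
  have tr: "complex_of_real (trace (A ^\<^sub>m k)) = (\<Sum>l\<leftarrow>lam. l ^ k)" for k
  proof -
    have "complex_of_real (trace (A ^\<^sub>m k)) = trace (map_mat complex_of_real (A ^\<^sub>m k))"
      by (rule trace_map_of_real[symmetric, of _ N], insert A', auto)
    also have "map_mat complex_of_real (A ^\<^sub>m k) = map_mat complex_of_real A ^\<^sub>m k"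
      by (rule of_real_hom.mat_hom_pow[OF A'])
    also have "trace \<dots> = (\<Sum>l\<leftarrow>lam. l ^ k)" by (rule trace_pow_char_poly[OF cA cp])
    finally show ?thesis .
  qed
  show ?thesis
    unfolding nN using Cpq_generic[OF A' p q tp tq tpq] by (simp add: tr[symmetric])
qed


lemma kernel_subspace:
  fixes M :: "'a::field mat"
  assumes M: "M \<in> carrier_mat nr nc"
  shows "lin_subspace nc (mat_kernel M)"
proof -
  interpret K: kernel nr nc M by (unfold_locales, rule M)
  interpret V: vec_space "TYPE('a)" nc .
  have sm: "submodule class_ring (mat_kernel M) (module_vec TYPE('a) nc)"
  proof (unfold submodule_def, intro conjI)
    show "module class_ring (module_vec TYPE('a) nc)" by (rule vec_module)
    show "mat_kernel M \<subseteq> carrier (module_vec TYPE('a) nc)"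
      using mat_kernel_carrier[OF M] by (simp add: module_vec_simps)
  qed (insert M, auto simp: module_vec_simps class_ring_simps mat_kernel_def
      mult_add_distrib_mat_vec mult_mat_vec)
  show ?thesis unfolding lin_subspace_def subspace_def
    using sm vec_vs by auto
qed

lemma lin_dim_kernel:
  fixes M :: "'a::field mat"
  assumes M: "M \<in> carrier_mat nr nc"
  shows "lin_dim nc (mat_kernel M) = kernel_dim M"
  using M unfolding lin_dim_def kernel_dim_def by auto

lemma lin_subspaceD:
  fixes W :: "'a::field vec set"
  assumes "lin_subspace n W"
  shows "W \<subseteq> carrier_vec n" "0\<^sub>v n \<in> W"
    "\<And>x y. x \<in> W \<Longrightarrow> y \<in> W \<Longrightarrow> x + y \<in> W"
    "\<And>a x. x \<in> W \<Longrightarrow> a \<cdot>\<^sub>v x \<in> W"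
proof -
  have sm: "submodule class_ring W (module_vec TYPE('a) n)"
    using assms unfolding lin_subspace_def subspace_def by auto
  show "W \<subseteq> carrier_vec n" using submodule.subset[OF sm] by (simp add: module_vec_simps)
  show "0\<^sub>v n \<in> W" using submodule.zero_closed[OF sm] by (simp add: module_vec_simps)
  show "\<And>x y. x \<in> W \<Longrightarrow> y \<in> W \<Longrightarrow> x + y \<in> W" using submodule.m_closed[OF sm] by (simp add: module_vec_simps)
  show "\<And>a x. x \<in> W \<Longrightarrow> a \<cdot>\<^sub>v x \<in> W" using submodule.smult_closed[OF sm] by (simp add: module_vec_simps class_ring_simps)
qed

lemma lin_span_subset:
  fixes W :: "'a::field vec set"
  assumes "lin_subspace n W" "S \<subseteq> W"
  shows "lin_span n S \<subseteq> W"
proof -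
  interpret V: vec_space "TYPE('a)" n .
  have sm: "submodule class_ring W (module_vec TYPE('a) n)"
    using assms unfolding lin_subspace_def subspace_def by auto
  show ?thesis unfolding lin_span_def using V.span_is_subset[OF assms(2) sm] .
qed

lemma lin_span_zero:
  "(0\<^sub>v n :: 'a::field vec) \<in> lin_span n S"
proof -
  interpret V: vec_space "TYPE('a)" n .
  show ?thesis unfolding lin_span_def using V.span_zero by simp
qed

lemma lin_span_mem:
  fixes S :: "'a::field vec set"
  assumes "S \<subseteq> carrier_vec n" "x \<in> S"
  shows "x \<in> lin_span n S"
proof -
  interpret V: vec_space "TYPE('a)" n .
  show ?thesis unfolding lin_span_def using V.in_own_span[of S] assms by auto
qed

lemma kernel_eq_of_dim:
  fixes M1 M2 :: "'a::field mat"
  assumes M1: "M1 \<in> carrier_mat nr1 nc" and M2: "M2 \<in> carrier_mat nr2 nc"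
    and sub: "mat_kernel M1 \<subseteq> mat_kernel M2" and d: "kernel_dim M1 = kernel_dim M2"
  shows "mat_kernel M1 = mat_kernel M2"
proof -
  interpret K1: kernel nr1 nc M1 by (unfold_locales, rule M1)
  interpret K2: kernel nr2 nc M2 by (unfold_locales, rule M2)
  interpret V: vec_space "TYPE('a)" nc .
  have sm1: "submodule class_ring (mat_kernel M1) (module_vec TYPE('a) nc)"
    using kernel_subspace[OF M1] unfolding lin_subspace_def subspace_def by auto
  have sm2: "submodule class_ring (mat_kernel M2) (module_vec TYPE('a) nc)"
    using kernel_subspace[OF M2] unfolding lin_subspace_def subspace_def by auto
  obtain b where fin: "finite b" and bas: "K1.basis b" using kernel_basis_exists[OF M1] by auto
  obtain b2 where fin2: "finite b2" and bas2: "K2.basis b2" using kernel_basis_exists[OF M2] by auto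
  have fd2: "K2.Ker.fin_dim" using fin2 bas2 unfolding K2.Ker.fin_dim_def K2.Ker.basis_def by auto
  from bas have li1: "K1.lin_indpt b" and gen1: "K1.span b = mat_kernel M1" and b1: "b \<subseteq> mat_kernel M1"
    unfolding K1.Ker.basis_def by auto
  have card: "card b = K1.dim" using K1.Ker.dim_basis[OF fin bas] by simp
  have b2: "b \<subseteq> mat_kernel M2" using b1 sub by auto
  have "K2.lin_dep b = module.lin_dep class_ring (module_vec TYPE('a) nc) b" using module.span_li_not_depend(2)[OF vec_module b2 sm2] by simp
  also have "\<dots> = K1.lin_dep b" using module.span_li_not_depend(2)[OF vec_module b1 sm1] by simp
  finally have li2: "K2.lin_indpt b" using li1 by simp
  have dims: "K1.dim = K2.dim" using d by simp
  have "K2.basis b"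
    by (rule K2.Ker.dim_li_is_basis[OF fd2 fin b2 li2], insert card dims, simp)
  hence "K2.span b = mat_kernel M2" unfolding K2.Ker.basis_def by auto
  moreover have "K2.span b = module.span class_ring (module_vec TYPE('a) nc) b" using module.span_li_not_depend(1)[OF vec_module b2 sm2] by simp
  moreover have "K1.span b = module.span class_ring (module_vec TYPE('a) nc) b" using module.span_li_not_depend(1)[OF vec_module b1 sm1] by simp
  ultimately show ?thesis using gen1 by simp
qed

definition KM :: "nat \<Rightarrow> 'a::comm_ring_1 mat \<Rightarrow> 'a vec \<Rightarrow> 'a \<Rightarrow> 'a mat" where
  "KM N X y c = mat (Suc N) (Suc N) (\<lambda>(i,j). if i < N then (if j < N then X $$ (i,j) else y $ i)
      else (if j = N then c else 0))"

definition prj :: "nat \<Rightarrow> 'a vec \<Rightarrow> 'a vec" where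
  "prj N v = vec N (\<lambda>i. v $ i)"

lemma KM_carrier[simp]: "KM N X y c \<in> carrier_mat (Suc N) (Suc N)"
  unfolding KM_def by auto

lemma KM_dims[simp]: "dim_row (KM N X y c) = Suc N" "dim_col (KM N X y c) = Suc N"
  unfolding KM_def by auto

lemma prj_carrier[simp]: "prj N v \<in> carrier_vec N" and prj_index[simp]: "i < N \<Longrightarrow> prj N v $ i = v $ i"
  and prj_dim[simp]: "dim_vec (prj N v) = N"
  unfolding prj_def by auto

lemma KM_mult_vec:
  fixes X :: "'a::comm_ring_1 mat"
  assumes X: "X \<in> carrier_mat N N" and y: "y \<in> carrier_vec N" and v: "v \<in> carrier_vec (Suc N)"
  shows "KM N X y c *\<^sub>v v = vec (Suc N) (\<lambda>i. if i < N then (X *\<^sub>v prj N v) $ i + y $ i * v $ N else c * v $ N)"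
proof (rule eq_vecI)
  fix i assume i: "i < dim_vec (vec (Suc N) (\<lambda>i. if i < N then (X *\<^sub>v prj N v) $ i + y $ i * v $ N else c * v $ N))"
  hence i: "i < Suc N" by simp
  have "(KM N X y c *\<^sub>v v) $ i = (\<Sum>k<Suc N. KM N X y c $$ (i,k) * v $ k)"
    using i v by (simp add: scalar_prod_def atLeast0LessThan)
  also have "\<dots> = (\<Sum>k<N. KM N X y c $$ (i,k) * v $ k) + KM N X y c $$ (i,N) * v $ N" by simp
  also have "\<dots> = (if i < N then (X *\<^sub>v prj N v) $ i + y $ i * v $ N else c * v $ N)"
    using i X y by (auto simp: KM_def scalar_prod_def atLeast0LessThan)
  finally show "(KM N X y c *\<^sub>v v) $ i = vec (Suc N) (\<lambda>i. if i < N then (X *\<^sub>v prj N v) $ i + y $ i * v $ N else c * v $ N) $ i"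
    using i by simp
qed simp

lemma mem_kernel_KM:
  fixes X :: "'a::comm_ring_1 mat"
  assumes X: "X \<in> carrier_mat N N" and y: "y \<in> carrier_vec N"
  shows "v \<in> mat_kernel (KM N X y c) \<longleftrightarrow> v \<in> carrier_vec (Suc N) \<and> X *\<^sub>v prj N v + v $ N \<cdot>\<^sub>v y = 0\<^sub>v N \<and> c * v $ N = 0"
proof (cases "v \<in> carrier_vec (Suc N)")
  case True
  have "KM N X y c *\<^sub>v v = 0\<^sub>v (Suc N) \<longleftrightarrow> X *\<^sub>v prj N v + v $ N \<cdot>\<^sub>v y = 0\<^sub>v N \<and> c * v $ N = 0"
    (is "?l \<longleftrightarrow> ?r")
  proof
    assume ?l
    hence e: "\<And>i. i < Suc N \<Longrightarrow> (KM N X y c *\<^sub>v v) $ i = 0" by auto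
    show ?r
    proof
      show "X *\<^sub>v prj N v + v $ N \<cdot>\<^sub>v y = 0\<^sub>v N"
      proof (rule eq_vecI)
        fix i assume "i < dim_vec (0\<^sub>v N :: 'a vec)"
        hence i: "i < N" by simp
        from e[of i] i show "(X *\<^sub>v prj N v + v $ N \<cdot>\<^sub>v y) $ i = 0\<^sub>v N $ i"
          unfolding KM_mult_vec[OF X y True] using X y by (simp add: mult.commute)
      qed (insert X y, auto)
      show "c * v $ N = 0" using e[of N] unfolding KM_mult_vec[OF X y True] by simp
    qed
  next
    assume r: ?r
    show ?l
    proof (rule eq_vecI)
      fix i assume "i < dim_vec (0\<^sub>v (Suc N) :: 'a vec)"
      hence i: "i < Suc N" by simp
      show "(KM N X y c *\<^sub>v v) $ i = 0\<^sub>v (Suc N) $ i"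
      proof (cases "i < N")
        case True
        from arg_cong[OF conjunct1[OF r], of "\<lambda>w. w $ i"] True X y
        have "(X *\<^sub>v prj N v) $ i + v $ N * y $ i = 0" by simp
        then show ?thesis unfolding KM_mult_vec[OF X y \<open>v \<in> carrier_vec (Suc N)\<close>] using True i
          by (simp add: mult.commute)
      next
        case False
        then show ?thesis unfolding KM_mult_vec[OF X y \<open>v \<in> carrier_vec (Suc N)\<close>] using i r by simp
      qed
    qed (insert True, auto)
  qed
  then show ?thesis using True unfolding mat_kernel_def by simp
next
  case False
  then show ?thesis unfolding mat_kernel_def by simp
qed

definition Sm :: "nat \<Rightarrow> 'a::comm_ring_1 vec \<Rightarrow> 'a mat" where
  "Sm N d = mat (Suc N) (Suc N) (\<lambda>(i,j). if i = j then 1 else if i < N \<and> j = N then d $ i else 0)"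

lemma Sm_carrier[simp]: "Sm N d \<in> carrier_mat (Suc N) (Suc N)"
  and Sm_dims[simp]: "dim_row (Sm N d) = Suc N" "dim_col (Sm N d) = Suc N"
  unfolding Sm_def by auto

lemma KM_Sm:
  fixes X :: "'a::comm_ring_1 mat"
  assumes X: "X \<in> carrier_mat N N" and d: "d \<in> carrier_vec N"
  shows "KM N X (0\<^sub>v N) 0 * Sm N d = KM N X (X *\<^sub>v d) 0"
proof (rule eq_matI)
  fix i j assume "i < dim_row (KM N X (X *\<^sub>v d) 0)" "j < dim_col (KM N X (X *\<^sub>v d) 0)"
  hence i: "i < Suc N" and j: "j < Suc N" by auto
  have "(KM N X (0\<^sub>v N) 0 * Sm N d) $$ (i,j) = (\<Sum>k<Suc N. KM N X (0\<^sub>v N) 0 $$ (i,k) * Sm N d $$ (k,j))"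
    using i j by (simp add: scalar_prod_def atLeast0LessThan)
  also have "\<dots> = (\<Sum>k<N. KM N X (0\<^sub>v N) 0 $$ (i,k) * Sm N d $$ (k,j))"
    using i j by (simp add: KM_def)
  also have "\<dots> = KM N X (X *\<^sub>v d) 0 $$ (i,j)"
  proof (cases "i < N")
    case False then show ?thesis using i j by (simp add: KM_def)
  next
    case iN: True
    show ?thesis
    proof (cases "j < N")
      case True
      have "(\<Sum>k<N. KM N X (0\<^sub>v N) 0 $$ (i,k) * Sm N d $$ (k,j)) = (\<Sum>k<N. if k = j then X $$ (i,j) else 0)"
        by (rule sum.cong, insert iN True, auto simp: KM_def Sm_def)
      then show ?thesis using True iN by (simp add: KM_def)
    next
      case False
      hence jN: "j = N" using j by auto
      have "(\<Sum>k<N. KM N X (0\<^sub>v N) 0 $$ (i,k) * Sm N d $$ (k,j)) = (\<Sum>k<N. X $$ (i,k) * d $ k)"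
        by (rule sum.cong, insert iN jN, auto simp: KM_def Sm_def)
      then show ?thesis using jN iN X d by (simp add: KM_def scalar_prod_def atLeast0LessThan)
    qed
  qed
  finally show "(KM N X (0\<^sub>v N) 0 * Sm N d) $$ (i,j) = KM N X (X *\<^sub>v d) 0 $$ (i,j)" .
qed auto

lemma Sm_inv:
  fixes d :: "'a::comm_ring_1 vec"
  assumes d: "d \<in> carrier_vec N"
  shows "Sm N d * Sm N (- d) = 1\<^sub>m (Suc N)"
proof (rule eq_matI)
  fix i j assume "i < dim_row (1\<^sub>m (Suc N) :: 'a mat)" "j < dim_col (1\<^sub>m (Suc N) :: 'a mat)"
  hence i: "i < Suc N" and j: "j < Suc N" by auto
  have "(Sm N d * Sm N (- d)) $$ (i,j) = (\<Sum>k<Suc N. Sm N d $$ (i,k) * Sm N (- d) $$ (k,j))"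
    using i j by (simp add: scalar_prod_def atLeast0LessThan)
  also have "\<dots> = (\<Sum>k\<in>{i,j}. Sm N d $$ (i,k) * Sm N (- d) $$ (k,j))"
    by (rule sum.mono_neutral_right, insert i j, auto simp: Sm_def)
  also have "\<dots> = 1\<^sub>m (Suc N) $$ (i,j)"
    using i j d by (cases "i = j", auto simp: Sm_def)
  finally show "(Sm N d * Sm N (- d)) $$ (i,j) = 1\<^sub>m (Suc N) $$ (i,j)" .
qed auto

lemma KM_four_block:
  fixes X :: "'a::comm_ring_1 mat"
  assumes X: "X \<in> carrier_mat N N"
  shows "KM N X (0\<^sub>v N) 0 = four_block_mat X (0\<^sub>m N 1) (0\<^sub>m 1 N) (0\<^sub>m 1 1)"
  by (rule eq_matI, insert X, auto simp: KM_def four_block_mat_def)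

lemma kernel_dim_zero_1: "kernel.dim 1 (0\<^sub>m 1 1 :: 'a::field mat) = 1"
proof -
  interpret K: kernel 1 1 "0\<^sub>m 1 1 :: 'a mat" by (unfold_locales, auto)
  have "mat_kernel (0\<^sub>m 1 1 :: 'a mat) = carrier_vec 1" unfolding mat_kernel_def by auto
  hence "K.VK = module_vec TYPE('a) 1" by (simp add: module_vec_simps module_vec_def)
  then show ?thesis using K.NC.dim_is_n by simp
qed

lemma kernel_dim_KM:
  fixes X :: "'a::field mat"
  assumes X: "X \<in> carrier_mat N N" and d: "d \<in> carrier_vec N"
  shows "kernel_dim (KM N X (X *\<^sub>v d) 0) = kernel_dim X + 1"
proof -
  have "kernel_dim (KM N X (X *\<^sub>v d) 0) = kernel.dim (Suc N) (KM N X (0\<^sub>v N) 0 * Sm N d)"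
    unfolding kernel_dim_def KM_Sm[OF X d] by simp
  also have "\<dots> = kernel.dim (Suc N) (KM N X (0\<^sub>v N) 0)"
    by (rule mat_kernel_dim_mult_eq_right[OF KM_carrier Sm_carrier Sm_carrier Sm_inv[OF d]])
  also have "\<dots> = kernel.dim (N + 1) (four_block_mat X (0\<^sub>m N 1) (0\<^sub>m 1 N) (0\<^sub>m 1 1))"
    unfolding KM_four_block[OF X] by simp
  also have "\<dots> = kernel.dim N X + kernel.dim 1 (0\<^sub>m 1 1 :: 'a mat)"
    by (rule kernel_four_block_0_mat[OF refl X], auto)
  also have "\<dots> = kernel_dim X + 1" using X unfolding kernel_dim_def kernel_dim_zero_1 by simp
  finally show ?thesis .
qed


definition emb :: "nat \<Rightarrow> 'a::zero vec \<Rightarrow> 'a vec" where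
  "emb N w = vec (Suc N) (\<lambda>k. if k < N then w $ k else 0)"

lemma emb_carrier[simp]: "emb N w \<in> carrier_vec (Suc N)" and emb_dim[simp]: "dim_vec (emb N w) = Suc N"
  and emb_N[simp]: "emb N w $ N = 0"
  unfolding emb_def by auto

lemma prj_emb[simp]: "w \<in> carrier_vec N \<Longrightarrow> prj N (emb N w) = w"
  unfolding emb_def prj_def by (auto intro!: eq_vecI)

lemma emb_prj: "v \<in> carrier_vec (Suc N) \<Longrightarrow> v $ N = 0 \<Longrightarrow> emb N (prj N v) = v"
  unfolding emb_def prj_def by (intro eq_vecI, auto simp: less_Suc_eq)

lemma emb_smult: "w \<in> carrier_vec N \<Longrightarrow> emb N (a \<cdot>\<^sub>v w) = (a :: 'a :: comm_ring_1) \<cdot>\<^sub>v emb N w"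
  unfolding emb_def by (auto intro!: eq_vecI)

lemma emb_zero[simp]: "emb N (0\<^sub>v N) = (0\<^sub>v (Suc N) :: 'a::zero vec)"
  unfolding emb_def by (auto intro!: eq_vecI)

lemma emb_eq_zero: "w \<in> carrier_vec N \<Longrightarrow> emb N w = 0\<^sub>v (Suc N) \<Longrightarrow> w = (0\<^sub>v N :: 'a::zero vec)"
  using prj_emb[of w N] by (metis emb_zero prj_emb zero_carrier_vec)

lemma prj_add: "v \<in> carrier_vec (Suc N) \<Longrightarrow> w \<in> carrier_vec (Suc N) \<Longrightarrow> prj N (v + w) = prj N v + (prj N w :: 'a::plus vec)"
  unfolding prj_def by (auto intro!: eq_vecI)

lemma prj_minus: "v \<in> carrier_vec (Suc N) \<Longrightarrow> w \<in> carrier_vec (Suc N) \<Longrightarrow> prj N (v - w) = prj N v - (prj N w :: 'a::minus vec)"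
  unfolding prj_def by (auto intro!: eq_vecI)

lemma prj_smult: "v \<in> carrier_vec (Suc N) \<Longrightarrow> prj N (a \<cdot>\<^sub>v v) = a \<cdot>\<^sub>v (prj N v :: 'a::times vec)"
  unfolding prj_def by (auto intro!: eq_vecI)

lemma prj_unit_N: "prj N (unit_vec (Suc N) N) = (0\<^sub>v N :: 'a::zero_neq_one vec)"
  unfolding prj_def by (auto intro!: eq_vecI)

lemma br_eq:
  fixes A :: "'a::comm_ring_1 mat"
  assumes A: "A \<in> carrier_mat N N"
  shows "aA_bracket A (Suc N) u v = emb N (A *\<^sub>v (v $ N \<cdot>\<^sub>v prj N u - u $ N \<cdot>\<^sub>v prj N v))"
  unfolding aA_bracket_def emb_def
  by (rule eq_vecI, insert A, auto simp: scalar_prod_def atLeast0LessThan mult.commute intro!: sum.cong)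

lemma smult_vec_zero'[simp]: "a \<cdot>\<^sub>v 0\<^sub>v n = (0\<^sub>v n :: 'a::mult_zero vec)"
  by (rule eq_vecI, auto)

lemma mat_vec_zero[simp]: "M \<in> carrier_mat nr nc \<Longrightarrow> M *\<^sub>v 0\<^sub>v nc = (0\<^sub>v nr :: 'a::comm_ring_1 vec)"
  by (rule eq_vecI, auto simp: scalar_prod_def)

lemma add_smult_zero_vec[simp]: "x \<in> carrier_vec N \<Longrightarrow> x + a \<cdot>\<^sub>v 0\<^sub>v N = (x :: 'a::comm_ring_1 vec)"
  by (rule eq_vecI, auto)

lemma pow_Suc_mult_vec:
  fixes A :: "'a::comm_ring_1 mat"
  assumes A: "A \<in> carrier_mat N N" and w: "w \<in> carrier_vec N"
  shows "A ^\<^sub>m j *\<^sub>v (A *\<^sub>v w) = A ^\<^sub>m (Suc j) *\<^sub>v w"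
  using assoc_mult_mat_vec[of "A ^\<^sub>m j" N N A N w] A w by simp

lemma pow_comm_mult_vec:
  fixes A :: "'a::comm_ring_1 mat"
  assumes A: "A \<in> carrier_mat N N" and w: "w \<in> carrier_vec N"
  shows "A ^\<^sub>m j *\<^sub>v (A *\<^sub>v w) = A *\<^sub>v (A ^\<^sub>m j *\<^sub>v w)"
proof -
  have "A ^\<^sub>m j *\<^sub>v (A *\<^sub>v w) = (A ^\<^sub>m j * A) *\<^sub>v w" using assoc_mult_mat_vec[of "A ^\<^sub>m j" N N A N w] A w by simp
  also have "A ^\<^sub>m j * A = A * A ^\<^sub>m j" by (rule pow_mat_comm[OF A])
  also have "(A * A ^\<^sub>m j) *\<^sub>v w = A *\<^sub>v (A ^\<^sub>m j *\<^sub>v w)" using assoc_mult_mat_vec[of A N N "A ^\<^sub>m j" N w] A w by simp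
  finally show ?thesis .
qed

lemma mat_vec_lin2:
  fixes M :: "'a::field mat"
  assumes M: "M \<in> carrier_mat nr N" and x: "x \<in> carrier_vec N" and y: "y \<in> carrier_vec N"
  shows "M *\<^sub>v (a \<cdot>\<^sub>v x - b \<cdot>\<^sub>v y) = a \<cdot>\<^sub>v (M *\<^sub>v x) - b \<cdot>\<^sub>v (M *\<^sub>v y)"
  using M x y by (simp add: mult_minus_distrib_mat_vec mult_mat_vec[OF M x] mult_mat_vec[OF M y])

locale cs =
  fixes N :: nat and A :: "'a::field mat"
  assumes A: "A \<in> carrier_mat N N" and N1: "N \<ge> 1"
    and stab: "\<And>k. mat_kernel (A ^\<^sub>m k) \<subseteq> mat_kernel (A ^\<^sub>m N)"
begin

abbreviation "B \<equiv> A ^\<^sub>m N"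
abbreviation "br \<equiv> aA_bracket A (Suc N)"
definition "H0 = mat_kernel (KM N B (0\<^sub>v N) 0)"

lemma B: "B \<in> carrier_mat N N" using A by auto
lemma dimA[simp]: "dim_row A = N" "dim_col A = N" using A by auto
lemma Apow_mv_carrier[simp]: "A ^\<^sub>m j *\<^sub>v w \<in> carrier_vec N" "A *\<^sub>v w \<in> carrier_vec N"
  using pow_carrier_mat[OF A, of j] A unfolding carrier_vec_def carrier_mat_def by auto

lemma stab': assumes w: "w \<in> carrier_vec N" and e: "A ^\<^sub>m k *\<^sub>v w = 0\<^sub>v N" shows "B *\<^sub>v w = 0\<^sub>v N"
proof -
  have "w \<in> mat_kernel (A ^\<^sub>m k)" by (rule mat_kernelI[OF pow_carrier_mat[OF A] w e])
  then have "w \<in> mat_kernel B" using stab by blast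
  then show ?thesis using mat_kernelD[OF B] by blast
qed

lemma mem_H0: "v \<in> H0 \<longleftrightarrow> v \<in> carrier_vec (Suc N) \<and> B *\<^sub>v prj N v = 0\<^sub>v N"
proof -
  have "B *\<^sub>v prj N v \<in> carrier_vec N" using B by auto
  then show ?thesis unfolding H0_def mem_kernel_KM[OF B zero_carrier_vec] by auto
qed

lemma br_eq': "br u v = emb N (A *\<^sub>v (v $ N \<cdot>\<^sub>v prj N u - u $ N \<cdot>\<^sub>v prj N v))"
  by (rule br_eq[OF A])

lemma br_carrier[simp]: "br u v \<in> carrier_vec (Suc N)"
  unfolding br_eq' by simp

lemma B_A_comm: "w \<in> carrier_vec N \<Longrightarrow> B *\<^sub>v (A *\<^sub>v w) = A *\<^sub>v (B *\<^sub>v w)"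
  by (rule pow_comm_mult_vec[OF A])

lemma H0_subspace: "lin_subspace (Suc N) H0"
  unfolding H0_def by (rule kernel_subspace[OF KM_carrier])

lemma H0_closed: assumes x: "x \<in> H0" and y: "y \<in> H0" shows "br x y \<in> H0"
proof -
  from x y have xc: "x \<in> carrier_vec (Suc N)" and yc: "y \<in> carrier_vec (Suc N)"
    and bx: "B *\<^sub>v prj N x = 0\<^sub>v N" and bY: "B *\<^sub>v prj N y = 0\<^sub>v N" unfolding mem_H0 by auto
  let ?z = "y $ N \<cdot>\<^sub>v prj N x - x $ N \<cdot>\<^sub>v prj N y"
  have z: "?z \<in> carrier_vec N" by simp
  have "B *\<^sub>v ?z = 0\<^sub>v N" unfolding mat_vec_lin2[OF B prj_carrier prj_carrier] bx bY by auto
  hence "B *\<^sub>v (A *\<^sub>v ?z) = 0\<^sub>v N" unfolding B_A_comm[OF z] using A by auto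
  then show ?thesis unfolding mem_H0 br_eq' using A by auto
qed

lemma H0_subalgebra: "lie_subalgebra br (Suc N) H0"
  unfolding lie_subalgebra_def using H0_subspace H0_closed by auto

definition "U k = mat_kernel (KM N (A ^\<^sub>m (N - k)) (0\<^sub>v N) 1)"

lemma mem_U: "v \<in> U k \<longleftrightarrow> v \<in> carrier_vec (Suc N) \<and> A ^\<^sub>m (N - k) *\<^sub>v prj N v = 0\<^sub>v N \<and> v $ N = 0"
proof -
  have "A ^\<^sub>m (N - k) *\<^sub>v prj N v \<in> carrier_vec N" by (rule mult_mat_vec_carrier[OF pow_carrier_mat[OF A] prj_carrier])
  then show ?thesis unfolding U_def mem_kernel_KM[OF pow_carrier_mat[OF A] zero_carrier_vec] by auto
qed

lemma lower_central_U: "k \<ge> 1 \<Longrightarrow> lower_central br (Suc N) H0 k \<subseteq> U k"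
proof (induction k rule: nat_induct_at_least)
  case base
  show ?case unfolding One_nat_def lower_central.simps(2)
  proof (rule lin_span_subset)
    show "lin_subspace (Suc N) (U (Suc 0))" unfolding U_def by (rule kernel_subspace[OF KM_carrier])
    show "{br x y |x y. x \<in> H0 \<and> y \<in> lower_central br (Suc N) H0 0} \<subseteq> U (Suc 0)"
    proof
      fix v assume "v \<in> {br x y |x y. x \<in> H0 \<and> y \<in> lower_central br (Suc N) H0 0}"
      then obtain x y where v: "v = br x y" and x: "x \<in> H0" and y: "y \<in> lower_central br (Suc N) H0 0" by blast
      hence "y \<in> H0" by simp
      from x this have bx: "B *\<^sub>v prj N x = 0\<^sub>v N" and bY: "B *\<^sub>v prj N y = 0\<^sub>v N" unfolding mem_H0 by auto
      let ?z = "y $ N \<cdot>\<^sub>v prj N x - x $ N \<cdot>\<^sub>v prj N y"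
      have z: "?z \<in> carrier_vec N" by simp
      have "B *\<^sub>v ?z = 0\<^sub>v N" unfolding mat_vec_lin2[OF B prj_carrier prj_carrier] bx bY by auto
      moreover have "A ^\<^sub>m (N - Suc 0) *\<^sub>v (A *\<^sub>v ?z) = B *\<^sub>v ?z"
        unfolding pow_Suc_mult_vec[OF A z] using N1 by simp
      ultimately show "v \<in> U (Suc 0)" unfolding v mem_U br_eq' using A by auto
    qed
  qed
next
  case (Suc k)
  show ?case unfolding lower_central.simps(2)
  proof (rule lin_span_subset)
    show "lin_subspace (Suc N) (U (Suc k))" unfolding U_def by (rule kernel_subspace[OF KM_carrier])
    show "{br x y |x y. x \<in> H0 \<and> y \<in> lower_central br (Suc N) H0 k} \<subseteq> U (Suc k)"
    proof
      fix v assume "v \<in> {br x y |x y. x \<in> H0 \<and> y \<in> lower_central br (Suc N) H0 k}"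
      then obtain x y where v: "v = br x y" and x: "x \<in> H0" and y: "y \<in> lower_central br (Suc N) H0 k" by blast
      hence "y \<in> U k" using Suc.IH by auto
      hence yN: "y $ N = 0" and ay: "A ^\<^sub>m (N - k) *\<^sub>v prj N y = 0\<^sub>v N" unfolding mem_U by auto
      let ?z = "y $ N \<cdot>\<^sub>v prj N x - x $ N \<cdot>\<^sub>v prj N y"
      have z: "?z \<in> carrier_vec N" by simp
      have zz: "?z = - (x $ N) \<cdot>\<^sub>v prj N y" unfolding yN by (rule eq_vecI, auto)
      have "A ^\<^sub>m (N - Suc k) *\<^sub>v (A *\<^sub>v ?z) = 0\<^sub>v N"
      proof (cases "k < N")
        case True
        hence "Suc (N - Suc k) = N - k" by simp
        hence "A ^\<^sub>m (N - Suc k) *\<^sub>v (A *\<^sub>v ?z) = A ^\<^sub>m (N - k) *\<^sub>v ?z"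
          using pow_Suc_mult_vec[OF A z, of "N - Suc k"] by simp
        also have "\<dots> = - (x $ N) \<cdot>\<^sub>v (A ^\<^sub>m (N - k) *\<^sub>v prj N y)"
          unfolding zz by (rule mult_mat_vec[OF pow_carrier_mat[OF A] prj_carrier])
        finally show ?thesis unfolding ay by simp
      next
        case False
        hence "prj N y = 0\<^sub>v N" using ay A by simp
        hence "?z = 0\<^sub>v N" unfolding zz by simp
        then show ?thesis using A by simp
      qed
      then show "v \<in> U (Suc k)" unfolding v mem_U br_eq' using A by auto
    qed
  qed
qed

lemma H0_nilpotent: "lie_nilpotent br (Suc N) H0"
proof -
  have "lower_central br (Suc N) H0 N \<subseteq> U N" by (rule lower_central_U[OF N1])
  also have "U N \<subseteq> {0\<^sub>v (Suc N)}"
  proof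
    fix v assume "v \<in> U N"
    hence v: "v \<in> carrier_vec (Suc N)" and p: "prj N v = 0\<^sub>v N" and vN: "v $ N = 0"
      unfolding mem_U by auto
    have "v = emb N (prj N v)" using emb_prj[OF v vN] by simp
    then show "v \<in> {0\<^sub>v (Suc N)}" unfolding p by simp
  qed
  finally have sub: "lower_central br (Suc N) H0 N \<subseteq> {0\<^sub>v (Suc N)}" .
  obtain N' where N': "N = Suc N'" using N1 by (cases N, auto)
  have "0\<^sub>v (Suc N) \<in> lower_central br (Suc N) H0 N" unfolding N' lower_central.simps
    by (rule lin_span_zero)
  with sub have "lower_central br (Suc N) H0 N = {0\<^sub>v (Suc N)}" by auto
  then show ?thesis unfolding lie_nilpotent_def by blast
qed

lemma H0_normalizer: "lie_normalizer br (Suc N) H0 = H0"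
proof
  show "H0 \<subseteq> lie_normalizer br (Suc N) H0"
    unfolding lie_normalizer_def using H0_closed mem_H0 by auto
  show "lie_normalizer br (Suc N) H0 \<subseteq> H0"
  proof
    fix x assume "x \<in> lie_normalizer br (Suc N) H0"
    hence x: "x \<in> carrier_vec (Suc N)" and nx: "\<And>h. h \<in> H0 \<Longrightarrow> br x h \<in> H0"
      unfolding lie_normalizer_def by auto
    let ?e = "unit_vec (Suc N) N :: 'a vec"
    have e: "?e \<in> H0" unfolding mem_H0 prj_unit_N using B by auto
    have "br x ?e = emb N (A *\<^sub>v prj N x)" unfolding br_eq' prj_unit_N
      by (rule arg_cong[of _ _ "\<lambda>w. emb N (A *\<^sub>v w)"], rule eq_vecI, auto)
    with nx[OF e] have "B *\<^sub>v (A *\<^sub>v prj N x) = 0\<^sub>v N" unfolding mem_H0 using A by auto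
    hence "A ^\<^sub>m (Suc N) *\<^sub>v prj N x = 0\<^sub>v N" unfolding pow_Suc_mult_vec[OF A prj_carrier] .
    hence "B *\<^sub>v prj N x = 0\<^sub>v N" by (rule stab'[OF prj_carrier])
    then show "x \<in> H0" unfolding mem_H0 using x by auto
  qed
qed

lemma H0_cartan: "cartan_subalgebra br (Suc N) H0"
  unfolding cartan_subalgebra_def using H0_subalgebra H0_nilpotent H0_normalizer by auto


lemma smult_vec_eq_zero:
  fixes v :: "'a vec"
  assumes "c \<cdot>\<^sub>v v = 0\<^sub>v N" "c \<noteq> 0" "v \<in> carrier_vec N"
  shows "v = 0\<^sub>v N"
proof (rule eq_vecI)
  fix i assume "i < dim_vec (0\<^sub>v N :: 'a vec)"
  hence i: "i < N" by simp
  from arg_cong[OF assms(1), of "\<lambda>w. w $ i"] i assms(3) have "c * v $ i = 0" by simp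
  then show "v $ i = 0\<^sub>v N $ i" using assms(2) i by simp
qed (insert assms, auto)

lemma key_identity:
  assumes v: "v \<in> carrier_vec (Suc N)" and x: "x \<in> carrier_vec (Suc N)" and xN: "x $ N \<noteq> 0"
  shows "B *\<^sub>v prj N (v - (v $ N / x $ N) \<cdot>\<^sub>v x) = B *\<^sub>v prj N v + v $ N \<cdot>\<^sub>v (B *\<^sub>v ((- (1 / x $ N)) \<cdot>\<^sub>v prj N x))"
proof -
  have "prj N (v - (v $ N / x $ N) \<cdot>\<^sub>v x) = prj N v - (v $ N / x $ N) \<cdot>\<^sub>v prj N x"
    using v x by (simp add: prj_minus prj_smult)
  hence "B *\<^sub>v prj N (v - (v $ N / x $ N) \<cdot>\<^sub>v x) = B *\<^sub>v prj N v - (v $ N / x $ N) \<cdot>\<^sub>v (B *\<^sub>v prj N x)"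
    using B by (simp add: mult_minus_distrib_mat_vec mult_mat_vec[OF B prj_carrier])
  also have "\<dots> = B *\<^sub>v prj N v + v $ N \<cdot>\<^sub>v (B *\<^sub>v ((- (1 / x $ N)) \<cdot>\<^sub>v prj N x))"
    unfolding mult_mat_vec[OF B prj_carrier]
    by (rule eq_vecI, insert B, auto simp: field_simps)
  finally show ?thesis .
qed

lemma cartan_unique:
  assumes cart: "cartan_subalgebra br (Suc N) H"
  shows "lin_dim (Suc N) H = kernel_dim B + 1"
proof -
  from cart have sub: "lin_subspace (Suc N) H" and cl: "\<And>x y. x \<in> H \<Longrightarrow> y \<in> H \<Longrightarrow> br x y \<in> H"
    and nil: "lie_nilpotent br (Suc N) H" and nor: "lie_normalizer br (Suc N) H = H"
    unfolding cartan_subalgebra_def lie_subalgebra_def by auto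
  note Hc = lin_subspaceD[OF sub]
  have Hcar: "\<And>h. h \<in> H \<Longrightarrow> h \<in> carrier_vec (Suc N)" using Hc(1) by auto
  have Hminus: "\<And>u w. u \<in> H \<Longrightarrow> w \<in> H \<Longrightarrow> u - w \<in> H"
  proof -
    fix u w assume u: "u \<in> H" and w: "w \<in> H"
    have "u - w = u + (-1) \<cdot>\<^sub>v w" using Hcar[OF u] Hcar[OF w] by (intro eq_vecI, auto)
    then show "u - w \<in> H" using Hc(3)[OF u Hc(4)[OF w]] by simp
  qed
  have norm: "\<And>z. z \<in> carrier_vec (Suc N) \<Longrightarrow> (\<And>h. h \<in> H \<Longrightarrow> br z h \<in> H) \<Longrightarrow> z \<in> H"
    using nor unfolding lie_normalizer_def by blast
  let ?e = "unit_vec (Suc N) N :: 'a vec"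
  obtain x where x: "x \<in> H" and xN: "x $ N \<noteq> 0"
  proof (rule ccontr)
    assume "\<not> thesis"
    with that have all0: "\<And>h. h \<in> H \<Longrightarrow> h $ N = 0" by blast
    have I: "\<And>w :: 'a vec. w \<in> carrier_vec (Suc N) \<Longrightarrow> w $ N = 0 \<Longrightarrow> w \<in> H"
    proof -
      fix w :: "'a vec" assume w: "w \<in> carrier_vec (Suc N)" and wN: "w $ N = 0"
      show "w \<in> H"
      proof (rule norm[OF w])
        fix h assume h: "h \<in> H"
        have "br w h = emb N (A *\<^sub>v (0 \<cdot>\<^sub>v prj N w - 0 \<cdot>\<^sub>v prj N h))" unfolding br_eq' all0[OF h] wN ..
        also have "0 \<cdot>\<^sub>v prj N w - 0 \<cdot>\<^sub>v prj N h = 0\<^sub>v N" by (rule eq_vecI, auto)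
        finally show "br w h \<in> H" using Hc(2) A by simp
      qed
    qed
    have "?e \<in> H"
    proof (rule norm)
      fix h assume h: "h \<in> H"
      show "br ?e h \<in> H" by (rule I, auto simp: br_eq')
    qed simp
    from all0[OF this] show False by simp
  qed
  have xc: "x \<in> carrier_vec (Suc N)" using Hcar[OF x] .
  from nil obtain k0 where lc: "lower_central br (Suc N) H k0 = {0\<^sub>v (Suc N)}"
    unfolding lie_nilpotent_def by auto
  have kerH: "B *\<^sub>v prj N h = 0\<^sub>v N" if h: "h \<in> H" and hN: "h $ N = 0" for h
  proof -
    let ?c = "- (x $ N)"
    have claim: "emb N (?c ^ j \<cdot>\<^sub>v (A ^\<^sub>m j *\<^sub>v prj N h)) \<in> lower_central br (Suc N) H j" for j
    proof (induction j)
      case 0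
      have "emb N (?c ^ 0 \<cdot>\<^sub>v (A ^\<^sub>m 0 *\<^sub>v prj N h)) = emb N (prj N h)"
        using A by simp
      also have "\<dots> = h" by (rule emb_prj[OF Hcar[OF h] hN])
      finally show ?case using h by simp
    next
      case (Suc j)
      let ?w = "?c ^ j \<cdot>\<^sub>v (A ^\<^sub>m j *\<^sub>v prj N h)"
      have w: "?w \<in> carrier_vec N" using A by simp
      have "br x (emb N ?w) = emb N (A *\<^sub>v (0 \<cdot>\<^sub>v prj N x - x $ N \<cdot>\<^sub>v ?w))"
        unfolding br_eq' prj_emb[OF w] by simp
      also have "0 \<cdot>\<^sub>v prj N x - x $ N \<cdot>\<^sub>v ?w = ?c \<cdot>\<^sub>v ?w" using w by (intro eq_vecI, auto)
      also have "A *\<^sub>v (?c \<cdot>\<^sub>v ?w) = ?c \<cdot>\<^sub>v (A *\<^sub>v ?w)" by (rule mult_mat_vec[OF A w])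
      also have "A *\<^sub>v ?w = ?c ^ j \<cdot>\<^sub>v (A *\<^sub>v (A ^\<^sub>m j *\<^sub>v prj N h))"
        by (rule mult_mat_vec[OF A], insert A, simp)
      also have "A *\<^sub>v (A ^\<^sub>m j *\<^sub>v prj N h) = A ^\<^sub>m (Suc j) *\<^sub>v prj N h"
        using pow_comm_mult_vec[OF A prj_carrier, of j h] pow_Suc_mult_vec[OF A prj_carrier, of j h] by simp
      also have "?c \<cdot>\<^sub>v (?c ^ j \<cdot>\<^sub>v (A ^\<^sub>m (Suc j) *\<^sub>v prj N h)) = ?c ^ Suc j \<cdot>\<^sub>v (A ^\<^sub>m (Suc j) *\<^sub>v prj N h)"
        by (simp add: smult_smult_assoc)
      finally have eq: "br x (emb N ?w) = emb N (?c ^ Suc j \<cdot>\<^sub>v (A ^\<^sub>m Suc j *\<^sub>v prj N h))" .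
      have "br x (emb N ?w) \<in> lin_span (Suc N) {br x y |x y. x \<in> H \<and> y \<in> lower_central br (Suc N) H j}"
        by (rule lin_span_mem, insert x Suc.IH, auto)
      then show ?case unfolding lower_central.simps(2) eq .
    qed
    from claim[of k0] lc have "emb N (?c ^ k0 \<cdot>\<^sub>v (A ^\<^sub>m k0 *\<^sub>v prj N h)) = 0\<^sub>v (Suc N)" by simp
    hence "?c ^ k0 \<cdot>\<^sub>v (A ^\<^sub>m k0 *\<^sub>v prj N h) = 0\<^sub>v N" by (rule emb_eq_zero[rotated], insert A, simp)
    hence "A ^\<^sub>m k0 *\<^sub>v prj N h = 0\<^sub>v N" by (rule smult_vec_eq_zero, insert xN A, auto)
    then show ?thesis by (rule stab'[OF prj_carrier])
  qed
  define d where "d = (- (1 / x $ N)) \<cdot>\<^sub>v prj N x"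
  have d: "d \<in> carrier_vec N" unfolding d_def by simp
  define Hx where "Hx = mat_kernel (KM N B (B *\<^sub>v d) 0)"
  have Bd: "B *\<^sub>v d \<in> carrier_vec N" using B d by simp
  have memHx: "v \<in> Hx \<longleftrightarrow> v \<in> carrier_vec (Suc N) \<and> B *\<^sub>v prj N (v - (v $ N / x $ N) \<cdot>\<^sub>v x) = 0\<^sub>v N" for v
    unfolding Hx_def mem_kernel_KM[OF B Bd] using key_identity[OF _ xc xN, of v] unfolding d_def by auto
  have emb_in: "emb N w \<in> H" if w: "w \<in> carrier_vec N" and Bw: "B *\<^sub>v w = 0\<^sub>v N" for w
  proof -
    have Q: "m \<le> N \<Longrightarrow> emb N (A ^\<^sub>m (N - m) *\<^sub>v w) \<in> H" for m
    proof (induction m)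
      case 0
      then show ?case using Bw Hc(2) by simp
    next
      case (Suc m)
      let ?u = "A ^\<^sub>m (N - Suc m) *\<^sub>v w"
      have u: "?u \<in> carrier_vec N" using A w by simp
      have "Suc (N - Suc m) = N - m" using Suc.prems by simp
      hence Au: "A *\<^sub>v ?u = A ^\<^sub>m (N - m) *\<^sub>v w"
        using pow_comm_mult_vec[OF A w, of "N - Suc m"] pow_Suc_mult_vec[OF A w, of "N - Suc m"] by simp
      show ?case
      proof (rule norm)
        fix h assume h: "h \<in> H"
        have "br (emb N ?u) h = emb N (A *\<^sub>v (h $ N \<cdot>\<^sub>v ?u - 0 \<cdot>\<^sub>v prj N h))"
          unfolding br_eq' prj_emb[OF u] by simp
        also have "h $ N \<cdot>\<^sub>v ?u - 0 \<cdot>\<^sub>v prj N h = h $ N \<cdot>\<^sub>v ?u" using u by (intro eq_vecI, auto)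
        also have "A *\<^sub>v (h $ N \<cdot>\<^sub>v ?u) = h $ N \<cdot>\<^sub>v (A ^\<^sub>m (N - m) *\<^sub>v w)"
          unfolding mult_mat_vec[OF A u] Au ..
        also have "emb N \<dots> = h $ N \<cdot>\<^sub>v emb N (A ^\<^sub>m (N - m) *\<^sub>v w)"
          by (rule emb_smult, insert A w, simp)
        finally show "br (emb N ?u) h \<in> H" using Hc(4)[OF Suc.IH] Suc.prems by simp
      qed simp
    qed
    from Q[of N] show ?thesis using A w by simp
  qed
  have "H = Hx"
  proof
    show "H \<subseteq> Hx"
    proof
      fix h assume h: "h \<in> H"
      let ?g = "h - (h $ N / x $ N) \<cdot>\<^sub>v x"
      have g: "?g \<in> H" by (rule Hminus[OF h Hc(4)[OF x]])
      have gN: "?g $ N = 0" using Hcar[OF h] xc xN by simp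
      show "h \<in> Hx" unfolding memHx using kerH[OF g gN] Hcar[OF h] by simp
    qed
    show "Hx \<subseteq> H"
    proof
      fix v assume "v \<in> Hx"
      hence v: "v \<in> carrier_vec (Suc N)" and Bg: "B *\<^sub>v prj N (v - (v $ N / x $ N) \<cdot>\<^sub>v x) = 0\<^sub>v N"
        unfolding memHx by auto
      let ?g = "v - (v $ N / x $ N) \<cdot>\<^sub>v x"
      have gc: "?g \<in> carrier_vec (Suc N)" using v xc by simp
      have gN: "?g $ N = 0" using v xc xN by simp
      have "?g = emb N (prj N ?g)" using emb_prj[OF gc gN] by simp
      hence gH: "?g \<in> H" using emb_in[OF prj_carrier Bg] by simp
      have eqv: "v = ?g + (v $ N / x $ N) \<cdot>\<^sub>v x" using v xc by (intro eq_vecI, auto)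
      have mem: "?g + (v $ N / x $ N) \<cdot>\<^sub>v x \<in> H" by (rule Hc(3)[OF gH Hc(4)[OF x]])
      show "v \<in> H" by (subst eqv, rule mem)
    qed
  qed
  then have "lin_dim (Suc N) H = kernel_dim (KM N B (B *\<^sub>v d) 0)"
    unfolding Hx_def by (simp add: lin_dim_kernel[OF KM_carrier])
  also have "\<dots> = kernel_dim B + 1" by (rule kernel_dim_KM[OF B d])
  finally show ?thesis .
qed

end


lemma stab_from_dims:
  fixes A :: "'a::field mat"
  assumes A: "A \<in> carrier_mat N N"
    and dims: "\<And>k. k \<ge> N \<Longrightarrow> kernel_dim (A ^\<^sub>m k) = kernel_dim (A ^\<^sub>m N)"
  shows "mat_kernel (A ^\<^sub>m k) \<subseteq> mat_kernel (A ^\<^sub>m N)"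
proof (cases "k \<le> N")
  case True
  show ?thesis
  proof
    fix w assume w: "w \<in> mat_kernel (A ^\<^sub>m k)"
    from mat_kernelD[OF pow_carrier_mat[OF A] w] have wc: "w \<in> carrier_vec N" and e: "A ^\<^sub>m k *\<^sub>v w = 0\<^sub>v N" by auto
    have "A ^\<^sub>m N = A ^\<^sub>m (N - k) * A ^\<^sub>m k" using pow_mat_add[OF A, of "N - k" k] True by simp
    hence "A ^\<^sub>m N *\<^sub>v w = A ^\<^sub>m (N - k) *\<^sub>v (A ^\<^sub>m k *\<^sub>v w)"
      using assoc_mult_mat_vec[of "A ^\<^sub>m (N - k)" N N "A ^\<^sub>m k" N w] A wc by simp
    also have "\<dots> = 0\<^sub>v N" unfolding e using A by simp
    finally show "w \<in> mat_kernel (A ^\<^sub>m N)" by (rule mat_kernelI[OF pow_carrier_mat[OF A] wc])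
  qed
next
  case False
  have sub: "mat_kernel (A ^\<^sub>m N) \<subseteq> mat_kernel (A ^\<^sub>m k)"
  proof
    fix w assume w: "w \<in> mat_kernel (A ^\<^sub>m N)"
    from mat_kernelD[OF pow_carrier_mat[OF A] w] have wc: "w \<in> carrier_vec N" and e: "A ^\<^sub>m N *\<^sub>v w = 0\<^sub>v N" by auto
    have "A ^\<^sub>m k = A ^\<^sub>m (k - N) * A ^\<^sub>m N" using pow_mat_add[OF A, of "k - N" N] False by simp
    hence "A ^\<^sub>m k *\<^sub>v w = A ^\<^sub>m (k - N) *\<^sub>v (A ^\<^sub>m N *\<^sub>v w)"
      using assoc_mult_mat_vec[of "A ^\<^sub>m (k - N)" N N "A ^\<^sub>m N" N w] A wc by simp
    also have "\<dots> = 0\<^sub>v N" unfolding e using A by simp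
    finally show "w \<in> mat_kernel (A ^\<^sub>m k)" by (rule mat_kernelI[OF pow_carrier_mat[OF A] wc])
  qed
  have "mat_kernel (A ^\<^sub>m N) = mat_kernel (A ^\<^sub>m k)"
    by (rule kernel_eq_of_dim[OF pow_carrier_mat[OF A] pow_carrier_mat[OF A] sub], insert dims[of k] False, simp)
  then show ?thesis by simp
qed

lemma complex_kdim:
  fixes A :: "complex mat"
  assumes A: "A \<in> carrier_mat N N" and k: "k \<ge> N"
  shows "kernel_dim (A ^\<^sub>m k) = Polynomial.order 0 (char_poly A)"
proof -
  from char_poly_factorized[OF A] obtain as where cp: "char_poly A = (\<Prod> a \<leftarrow> as. [:- a, 1:])" by auto
  from jordan_nf_exists[OF A cp] obtain n_as where jnf: "jordan_nf A n_as" by auto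
  have cm: "char_matrix A 0 = A" unfolding char_matrix_def using A by (intro eq_matI, auto)
  have "kernel_dim (A ^\<^sub>m k) = dim_gen_eigenspace A 0 k" unfolding dim_gen_eigenspace_def cm ..
  also have "\<dots> = (\<Sum> n \<leftarrow> map fst [(n, e)\<leftarrow>n_as . e = 0]. min k n)" by (rule dim_gen_eigenspace[OF jnf])
  also have "\<dots> = sum_list (map fst [(n, e)\<leftarrow>n_as . e = 0])"
  proof -
    from jnf have "similar_mat A (jordan_matrix n_as)" unfolding jordan_nf_def by auto
    from similar_matD[OF this] obtain n' P Q where "{A, jordan_matrix n_as, P, Q} \<subseteq> carrier_mat n' n'" by blast
    hence "A \<in> carrier_mat n' n'" "jordan_matrix n_as \<in> carrier_mat n' n'" by auto
    hence Nsum: "N = sum_list (map fst n_as)" using A jordan_matrix_carrier[of n_as] unfolding carrier_mat_def by auto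
    have le: "n \<le> N" if n: "n \<in> set (map fst n_as)" for n
      using member_le_sum_list[OF n] Nsum by simp
    have "map (min k) (map fst [(n, e)\<leftarrow>n_as . e = 0]) = map fst [(n, e)\<leftarrow>n_as . e = 0]"
    proof (rule map_idI)
      fix n assume "n \<in> set (map fst [(n, e)\<leftarrow>n_as . e = (0::complex)])"
      hence "n \<in> set (map fst n_as)" by auto
      then show "min k n = n" using le k by fastforce
    qed
    then show ?thesis by (simp only:)
  qed
  also have "[(n, e)\<leftarrow>n_as . e = 0] = filter (\<lambda>na. snd na = 0) n_as"
    by (rule filter_cong, auto)
  also have "sum_list (map fst (filter (\<lambda>na. snd na = 0) n_as)) = Polynomial.order 0 (char_poly A)"
    unfolding jordan_nf_order[OF jnf] ..
  finally show ?thesis .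
qed


lemma row_zero_iff:
  fixes X :: "'a::zero mat"
  assumes X: "X \<in> carrier_mat nr nc" and i: "i < nr"
  shows "(row X i = 0\<^sub>v nc) \<longleftrightarrow> (\<forall>j<nc. X $$ (i,j) = 0)"
proof
  assume "row X i = 0\<^sub>v nc"
  then show "\<forall>j<nc. X $$ (i,j) = 0" using X i
    by (metis carrier_matD(2) index_row(1) index_zero_vec(1) carrier_matD(1))
next
  assume "\<forall>j<nc. X $$ (i,j) = 0"
  then show "row X i = 0\<^sub>v nc" using X i by (intro eq_vecI, auto)
qed

lemma kernel_dim_map_real:
  fixes M :: "real mat"
  assumes M: "M \<in> carrier_mat nr nc"
  shows "kernel_dim (map_mat complex_of_real M) = kernel_dim M"
proof -
  obtain C where gj: "gauss_jordan_single M = C" by auto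
  note g = gauss_jordan_single[OF M gj]
  have C: "C \<in> carrier_mat nr nc" by (rule g(2))
  have row: "row_echelon_form C" by (rule g(3))
  from g(4) obtain P Q where CPM: "C = P * M" and P: "P \<in> carrier_mat nr nr" and Q: "Q \<in> carrier_mat nr nr"
    and QP: "Q * P = 1\<^sub>m nr" by auto
  have "mat_kernel M = mat_kernel C" unfolding CPM by (rule mat_kernel_mult_eq[OF M P Q QP, symmetric])
  hence "kernel_dim M = kernel_dim C"
    using lin_dim_kernel[OF M] lin_dim_kernel[OF C] by simp
  also have "kernel_dim C = nc - card {i. i < nr \<and> row C i \<noteq> 0\<^sub>v nc}"
    using find_base_vectors(6)[OF row C] C unfolding kernel_dim_def by simp
  finally have r: "kernel_dim M = nc - card {i. i < nr \<and> row C i \<noteq> 0\<^sub>v nc}" .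
  let ?h = "map_mat complex_of_real"
  have cM: "?h M \<in> carrier_mat nr nc" and cC: "?h C \<in> carrier_mat nr nc"
    and cP: "?h P \<in> carrier_mat nr nr" and cQ: "?h Q \<in> carrier_mat nr nr" using M C P Q by auto
  have cCPM: "?h C = ?h P * ?h M" unfolding CPM by (rule of_real_hom.mat_hom_mult[OF P M])
  have h1: "?h (1\<^sub>m nr) = 1\<^sub>m nr" by (rule eq_matI, auto)
  have hm: "?h (Q * P) = ?h Q * ?h P" by (rule of_real_hom.mat_hom_mult[OF Q P])
  have cQP: "?h Q * ?h P = 1\<^sub>m nr" unfolding hm[symmetric] QP h1 ..
  have "mat_kernel (?h M) = mat_kernel (?h C)" unfolding cCPM by (rule mat_kernel_mult_eq[OF cM cP cQ cQP, symmetric])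
  hence "kernel_dim (?h M) = kernel_dim (?h C)"
    using lin_dim_kernel[OF cM] lin_dim_kernel[OF cC] by simp
  moreover have rowc: "row_echelon_form (?h C)"
  proof -
    from row obtain f where pf: "pivot_fun C f (dim_col C)" unfolding row_echelon_form_def by auto
    have "pivot_fun (?h C) f (dim_col (?h C))"
      using pf C unfolding pivot_fun_def Let_def by auto
    then show ?thesis unfolding row_echelon_form_def by auto
  qed
  moreover have "kernel_dim (?h C) = nc - card {i. i < nr \<and> row (?h C) i \<noteq> 0\<^sub>v nc}"
    using find_base_vectors(6)[OF rowc cC] cC unfolding kernel_dim_def by simp
  moreover have "{i. i < nr \<and> row (?h C) i \<noteq> 0\<^sub>v nc} = {i. i < nr \<and> row C i \<noteq> 0\<^sub>v nc}"
    using row_zero_iff[OF C] row_zero_iff[OF cC] C by auto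
  ultimately show ?thesis using r by simp
qed


lemma real_kdim:
  fixes A :: "real mat"
  assumes A: "A \<in> carrier_mat N N" and k: "k \<ge> N"
  shows "kernel_dim (A ^\<^sub>m k) = Polynomial.order 0 (char_poly A)"
proof -
  let ?h = "map_mat complex_of_real"
  have "kernel_dim (A ^\<^sub>m k) = kernel_dim (?h (A ^\<^sub>m k))"
    by (rule kernel_dim_map_real[symmetric, OF pow_carrier_mat[OF A]])
  also have "?h (A ^\<^sub>m k) = ?h A ^\<^sub>m k" by (rule of_real_hom.mat_hom_pow[OF A])
  also have "kernel_dim (?h A ^\<^sub>m k) = Polynomial.order 0 (char_poly (?h A))"
    by (rule complex_kdim[OF _ k], insert A, simp)
  also have "char_poly (?h A) = map_poly complex_of_real (char_poly A)"
    by (rule of_real_hom.char_poly_hom[OF A])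
  also have "Polynomial.order 0 (map_poly complex_of_real (char_poly A)) = Polynomial.order 0 (char_poly A)"
  proof -
    interpret M: map_poly_inj_idom_divide_hom "complex_of_real :: real \<Rightarrow> complex" ..
    show ?thesis using M.order_hom[of 0 "char_poly A"] by simp
  qed
  finally show ?thesis .
qed

lemma cartan_part:
  fixes A :: "'a::field mat"
  assumes A: "A \<in> carrier_mat N N" and N1: "N \<ge> 1"
    and kd: "\<And>k. k \<ge> N \<Longrightarrow> kernel_dim (A ^\<^sub>m k) = Polynomial.order 0 (char_poly A)"
  shows "(\<exists>H. cartan_subalgebra (aA_bracket A (Suc N)) (Suc N) H) \<and>
       (\<forall>H. cartan_subalgebra (aA_bracket A (Suc N)) (Suc N) H \<longrightarrow>
            lin_dim (Suc N) H = Polynomial.order 0 (char_poly A) + 1)"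
proof -
  have stab: "\<And>k. mat_kernel (A ^\<^sub>m k) \<subseteq> mat_kernel (A ^\<^sub>m N)"
    by (rule stab_from_dims[OF A], insert kd, simp)
  interpret cs N A by (unfold_locales, rule A, rule N1, rule stab)
  show ?thesis using H0_cartan cartan_unique kd[of N] by auto
qed

theorem lemma2:
  fixes n p q :: nat
  assumes "n \<ge> 2" and "p \<ge> 1" and "q \<ge> 1"
  shows
   "(\<forall>(A :: real mat) (lam :: complex list).
       A \<in> carrier_mat (n - 1) (n - 1) \<longrightarrow>
       char_poly (map_mat complex_of_real A) = (\<Prod>l\<leftarrow>lam. [:- l, 1:]) \<longrightarrow>
       trace (A ^\<^sub>m p) \<noteq> 0 \<longrightarrow> trace (A ^\<^sub>m q) \<noteq> 0 \<longrightarrow> trace (A ^\<^sub>m (p + q)) \<noteq> 0 \<longrightarrow>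
       Cpq_well_defined_with_value (aA_bracket A n) n p q
          (trace (A ^\<^sub>m p) * trace (A ^\<^sub>m q) / trace (A ^\<^sub>m (p + q))) \<and>
       complex_of_real (trace (A ^\<^sub>m p) * trace (A ^\<^sub>m q) / trace (A ^\<^sub>m (p + q))) =
         (\<Sum>l\<leftarrow>lam. l ^ p) * (\<Sum>l\<leftarrow>lam. l ^ q) / (\<Sum>l\<leftarrow>lam. l ^ (p + q)))
    \<and>
    (\<forall>(A :: complex mat) (lam :: complex list).
       A \<in> carrier_mat (n - 1) (n - 1) \<longrightarrow>
       char_poly A = (\<Prod>l\<leftarrow>lam. [:- l, 1:]) \<longrightarrow>
       trace (A ^\<^sub>m p) \<noteq> 0 \<longrightarrow> trace (A ^\<^sub>m q) \<noteq> 0 \<longrightarrow> trace (A ^\<^sub>m (p + q)) \<noteq> 0 \<longrightarrow>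
       Cpq_well_defined_with_value (aA_bracket A n) n p q
          (trace (A ^\<^sub>m p) * trace (A ^\<^sub>m q) / trace (A ^\<^sub>m (p + q))) \<and>
       trace (A ^\<^sub>m p) * trace (A ^\<^sub>m q) / trace (A ^\<^sub>m (p + q)) =
         (\<Sum>l\<leftarrow>lam. l ^ p) * (\<Sum>l\<leftarrow>lam. l ^ q) / (\<Sum>l\<leftarrow>lam. l ^ (p + q)))
    \<and>
    (\<forall>A :: real mat. A \<in> carrier_mat (n - 1) (n - 1) \<longrightarrow>
       (\<exists>H. cartan_subalgebra (aA_bracket A n) n H) \<and>
       (\<forall>H. cartan_subalgebra (aA_bracket A n) n H \<longrightarrow>
            lin_dim n H = Polynomial.order 0 (char_poly A) + 1))
    \<and>
    (\<forall>A :: complex mat. A \<in> carrier_mat (n - 1) (n - 1) \<longrightarrow>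
       (\<exists>H. cartan_subalgebra (aA_bracket A n) n H) \<and>
       (\<forall>H. cartan_subalgebra (aA_bracket A n) n H \<longrightarrow>
            lin_dim n H = Polynomial.order 0 (char_poly A) + 1))"
proof -
  obtain N where nN: "n = Suc N" and N1: "N \<ge> 1" using assms(1) by (cases n, auto)
  have nm: "n - 1 = N" using nN by simp
  show ?thesis
  proof (intro conjI allI impI)
    fix A :: "real mat" and lam :: "complex list"
    assume "A \<in> carrier_mat (n - 1) (n - 1)"
      "char_poly (map_mat complex_of_real A) = (\<Prod>l\<leftarrow>lam. [:- l, 1:])"
      "trace (A ^\<^sub>m p) \<noteq> 0" "trace (A ^\<^sub>m q) \<noteq> 0" "trace (A ^\<^sub>m (p + q)) \<noteq> 0"
    from part_real[OF assms this] show "Cpq_well_defined_with_value (aA_bracket A n) n p q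
          (trace (A ^\<^sub>m p) * trace (A ^\<^sub>m q) / trace (A ^\<^sub>m (p + q)))"
      "complex_of_real (trace (A ^\<^sub>m p) * trace (A ^\<^sub>m q) / trace (A ^\<^sub>m (p + q))) =
         (\<Sum>l\<leftarrow>lam. l ^ p) * (\<Sum>l\<leftarrow>lam. l ^ q) / (\<Sum>l\<leftarrow>lam. l ^ (p + q))" by auto
  next
    fix A :: "complex mat" and lam :: "complex list"
    assume "A \<in> carrier_mat (n - 1) (n - 1)"
      "char_poly A = (\<Prod>l\<leftarrow>lam. [:- l, 1:])"
      "trace (A ^\<^sub>m p) \<noteq> 0" "trace (A ^\<^sub>m q) \<noteq> 0" "trace (A ^\<^sub>m (p + q)) \<noteq> 0"
    from part_complex[OF assms this] show "Cpq_well_defined_with_value (aA_bracket A n) n p q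
          (trace (A ^\<^sub>m p) * trace (A ^\<^sub>m q) / trace (A ^\<^sub>m (p + q)))"
      "trace (A ^\<^sub>m p) * trace (A ^\<^sub>m q) / trace (A ^\<^sub>m (p + q)) =
         (\<Sum>l\<leftarrow>lam. l ^ p) * (\<Sum>l\<leftarrow>lam. l ^ q) / (\<Sum>l\<leftarrow>lam. l ^ (p + q))" by auto
  next
    fix A :: "real mat"
    assume "A \<in> carrier_mat (n - 1) (n - 1)"
    hence A: "A \<in> carrier_mat N N" using nm by simp
    from cartan_part[OF A N1 real_kdim[OF A]]
    show "\<exists>H. cartan_subalgebra (aA_bracket A n) n H" unfolding nN by auto
    fix H assume "cartan_subalgebra (aA_bracket A n) n H"
    with cartan_part[OF A N1 real_kdim[OF A]]
    show "lin_dim n H = Polynomial.order 0 (char_poly A) + 1" unfolding nN by auto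
  next
    fix A :: "complex mat"
    assume "A \<in> carrier_mat (n - 1) (n - 1)"
    hence A: "A \<in> carrier_mat N N" using nm by simp
    from cartan_part[OF A N1 complex_kdim[OF A]]
    show "\<exists>H. cartan_subalgebra (aA_bracket A n) n H" unfolding nN by auto
    fix H assume "cartan_subalgebra (aA_bracket A n) n H"
    with cartan_part[OF A N1 complex_kdim[OF A]]
    show "lin_dim n H = Polynomial.order 0 (char_poly A) + 1" unfolding nN by auto
  qed
qed


end
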